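(* Fix $\lambda>0$. The function $\mathcal{L}(\cdot,\lambda)$ defined in the context is coercive on $\mathcal{K}$, in the sense that $\mathcal{L}(\mathbf{K},\lambda)\to\infty$ as $\mathbf{K}\to\partial\mathcal{K}$, where $\partial\mathcal{K}$ denotes the boundary of $\mathcal{K}$.
   Context: Consider the linear system $\mathbf{x}_{k+1}=\mathbf{A}\mathbf{x}_k+\mathbf{B}\mathbf{u}_k+\mathbf{w}_k$ with $\mathbf{x}_k\in\mathbb{R}^n$, $\mathbf{u}_k\in\mathbb{R}^p$, $(\mathbf{A},\mathbf{B})$ stabilizable, and i.i.d. noise $\mathbf{w}_k\sim\mathcal{N}(0,\Sigma_w)$. Let $\mathbf{Q}\in\mathbb{R}^{n\times n}$, $\mathbf{R}\in\mathbb{R}^{p\times p}$ be positive definite, $(\mathbf{A},\mathbf{Q}^{1/2})$ detectable, $\epsilon>0$, $\delta>0$, $\mathbf{q}\in\mathbb{R}^n$. Policies are $\mathbf{u}_k=-\mathbf{K}\mathbf{x}_k+\sigma_k$ with $\sigma_k\sim\mathcal{N}(0,\Sigma_\sigma)$ i.i.d., $\Sigma_\sigma$ a fixed covariance matrix, $\mathbf{K}\in\mathbb{R}^{p\times n}$. Let $\Sigma_{\bar w}=\Sigma_w+\mathbf{B}\Sigma_\sigma\mathbf{B}^T$ and $\mathcal{K}=\{\mathbf{K}:\rho(\mathbf{A}-\mathbf{B}\mathbf{K})<1\}$ ($\rho$ = spectral radius). For $\mathbf{K}\in\mathcal{K}$, let $\Sigma_K$ and $\mathbf{P}_K$ be the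 unique solutions of $\Sigma_K=\Sigma_{\bar w}+(\mathbf{A}-\mathbf{B}\mathbf{K})\Sigma_K(\mathbf{A}-\mathbf{B}\mathbf{K})^T$ and $\mathbf{P}_K=\mathbf{Q}+\mathbf{K}^T\mathbf{R}\mathbf{K}+(\mathbf{A}-\mathbf{B}\mathbf{K})^T\mathbf{P}_K(\mathbf{A}-\mathbf{B}\mathbf{K})$. Define $J(\mathbf{K})=\mathrm{tr}((\mathbf{Q}+\mathbf{K}^T\mathbf{R}\mathbf{K})\Sigma_K+\mathbf{R}\Sigma_\sigma)=\mathrm{tr}(\mathbf{P}_K\Sigma_{\bar w}+\mathbf{R}\Sigma_\sigma)$ (the infinite-horizon average expected cost $\mathbf{x}^T\mathbf{Q}\mathbf{x}+\mathbf{u}^T\mathbf{R}\mathbf{u}$), and $J_c(\mathbf{K})=\mathrm{E}[Q(a(\mathbf{x},\mathbf{K}))]$, the expectation over the stationary (ergodic) state distribution $\mathbf{x}\sim\mathcal{N}(0,\Sigma_K)$ of the closed loop, where $Q(a)=\frac{1}{\sqrt{2\pi}}\int_a^\infty e^{-z^2/2}dz$ and $a(\mathbf{x},\mathbf{K})=\frac{\epsilon-\mathbf{q}^T(\mathbf{A}-\mathbf{B}\mathbf{K})\mathbf{x}}{\sqrt{\mathbf{q}^T\Sigma_{\bar w}\mathbf{q}}}$ ($J_c$ is the long-run average probability that $\mathbf{q}^T\mathbf{x}_{k+1}\ge\epsilon$ given the past). The Lagrangian is $\mathcal{L}(\mathbf{K},\lambda)=J(\mathbf{K})+\lambda(J_c(\mathbf{K})-\delta)$.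 *)

theory Defs
  imports "HOL-Analysis.Analysis"
begin

definition spectral_radius :: "real^'n^'n \<Rightarrow> real" where
  "spectral_radius M =
     Sup (cmod ` {z::complex. det ((mat z :: complex^'n^'n) - (\<chi> i j. complex_of_real (M$i$j))) = 0})"

definition sym_mat :: "real^'n^'n \<Rightarrow> bool" where
  "sym_mat M \<longleftrightarrow> transpose M = M"

definition pos_def :: "real^'n^'n \<Rightarrow> bool" where
  "pos_def M \<longleftrightarrow> sym_mat M \<and> (\<forall>x. x \<noteq> 0 \<longrightarrow> x \<bullet> (M *v x) > 0)"

definition pos_semidef :: "real^'n^'n \<Rightarrow> bool" where
  "pos_semidef M \<longleftrightarrow> sym_mat M \<and> (\<forall>x. x \<bullet> (M *v x) \<ge> 0)"

definition psd_sqrt :: "real^'n^'n \<Rightarrow> real^'n^'n" where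
  "psd_sqrt M = (THE S. pos_semidef S \<and> S ** S = M)"

definition stabilizable :: "real^'n^'n \<Rightarrow> real^'p^'n \<Rightarrow> bool" where
  "stabilizable A B \<longleftrightarrow> (\<exists>K::real^'n^'p. spectral_radius (A - B ** K) < 1)"

definition detectable :: "real^'n^'n \<Rightarrow> real^'n^'m \<Rightarrow> bool" where
  "detectable A C \<longleftrightarrow> (\<exists>L::real^'m^'n. spectral_radius (A - L ** C) < 1)"

definition stab_set :: "real^'n^'n \<Rightarrow> real^'p^'n \<Rightarrow> (real^'n^'p) set" where
  "stab_set A B = {K. spectral_radius (A - B ** K) < 1}"

definition Sigma_bar :: "real^'n^'n \<Rightarrow> real^'p^'n \<Rightarrow> real^'p^'p \<Rightarrow> real^'n^'n" where
  "Sigma_bar Sw B Ss = Sw + B ** Ss ** transpose B"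

definition Sigma_K :: "real^'n^'n \<Rightarrow> real^'p^'n \<Rightarrow> real^'n^'n \<Rightarrow> real^'p^'p
    \<Rightarrow> real^'n^'p \<Rightarrow> real^'n^'n" where
  "Sigma_K A B Sw Ss K = (THE S. S = Sigma_bar Sw B Ss + (A - B ** K) ** S ** transpose (A - B ** K))"

definition P_K :: "real^'n^'n \<Rightarrow> real^'p^'n \<Rightarrow> real^'n^'n \<Rightarrow> real^'p^'p
    \<Rightarrow> real^'n^'p \<Rightarrow> real^'n^'n" where
  "P_K A B Q R K = (THE P. P = Q + transpose K ** R ** K + transpose (A - B ** K) ** P ** (A - B ** K))"

definition J_cost :: "real^'n^'n \<Rightarrow> real^'p^'n \<Rightarrow> real^'n^'n \<Rightarrow> real^'p^'p
    \<Rightarrow> real^'n^'n \<Rightarrow> real^'p^'p \<Rightarrow> real^'n^'p \<Rightarrow> real" where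
  "J_cost A B Q R Sw Ss K =
     trace ((Q + transpose K ** R ** K) ** Sigma_K A B Sw Ss K) + trace (R ** Ss)"

definition Qfun :: "real \<Rightarrow> real" where
  "Qfun a = (LINT z|lborel. indicator {a..} z * exp (- (z^2) / 2)) / sqrt (2 * pi)"

(* Expectation of f under N(0, Sigma): x = L z with L L^T = Sigma, z standard normal in R^n *)
definition gauss_expect :: "real^'n^'n \<Rightarrow> (real^'n \<Rightarrow> real) \<Rightarrow> real" where
  "gauss_expect Sig f =
     (let L = (SOME L::real^'n^'n. L ** transpose L = Sig) in
      LINT z|lborel. (\<Prod>i\<in>UNIV. exp (- ((z$i)^2) / 2) / sqrt (2 * pi)) * f (L *v z))"

definition a_fun :: "real^'n^'n \<Rightarrow> real^'p^'n \<Rightarrow> real^'n^'n \<Rightarrow> real^'p^'p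
    \<Rightarrow> real \<Rightarrow> real^'n \<Rightarrow> real^'n \<Rightarrow> real^'n^'p \<Rightarrow> real" where
  "a_fun A B Sw Ss eps q x K =
     (eps - q \<bullet> ((A - B ** K) *v x)) / sqrt (q \<bullet> (Sigma_bar Sw B Ss *v q))"

definition Jc_cost :: "real^'n^'n \<Rightarrow> real^'p^'n \<Rightarrow> real^'n^'n \<Rightarrow> real^'p^'p
    \<Rightarrow> real \<Rightarrow> real^'n \<Rightarrow> real^'n^'p \<Rightarrow> real" where
  "Jc_cost A B Sw Ss eps q K =
     gauss_expect (Sigma_K A B Sw Ss K) (\<lambda>x. Qfun (a_fun A B Sw Ss eps q x K))"

definition Lagr :: "real^'n^'n \<Rightarrow> real^'p^'n \<Rightarrow> real^'n^'n \<Rightarrow> real^'p^'p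
    \<Rightarrow> real^'n^'n \<Rightarrow> real^'p^'p \<Rightarrow> real \<Rightarrow> real \<Rightarrow> real^'n \<Rightarrow> real^'n^'p \<Rightarrow> real \<Rightarrow> real" where
  "Lagr A B Q R Sw Ss eps delta q K lam =
     J_cost A B Q R Sw Ss K + lam * (Jc_cost A B Sw Ss eps q K - delta)"

end

theory Submission
  imports Defs "Jordan_Normal_Form.Spectral_Radius"
begin


no_notation vec_index (infixl "$" 100)
no_notation scalar_prod (infix "\<bullet>" 70)
hide_const (open) Matrix.mat Matrix.vec Matrix.row Matrix.col Determinant.det Spectral_Radius.spectral_radius

definition idx :: "'n::finite \<Rightarrow> nat" where
  "idx = (SOME h. bij_betw h (UNIV::'n set) {0..<CARD('n)})"

lemma idx_bij: "bij_betw (idx::'n::finite \<Rightarrow> nat) UNIV {0..<CARD('n)}"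
proof -
  have "\<exists>h. bij_betw h (UNIV::'n set) {0..<CARD('n)}" using ex_bij_betw_finite_nat[of "UNIV::'n set"] by simp
  then show ?thesis unfolding idx_def by (rule someI_ex)
qed

definition uidx :: "nat \<Rightarrow> 'n::finite" where "uidx = inv_into UNIV idx"

lemma uidx_bij: "bij_betw (uidx::nat \<Rightarrow> 'n::finite) {0..<CARD('n)} UNIV"
  unfolding uidx_def by (rule bij_betw_inv_into[OF idx_bij])

lemma uidx_idx[simp]: "uidx (idx (i::'n::finite)) = i"
  unfolding uidx_def using idx_bij bij_betw_inv_into_left by fastforce

lemma idx_uidx[simp]: "k < CARD('n) \<Longrightarrow> idx (uidx k :: 'n::finite) = k"
  unfolding uidx_def using idx_bij[where 'n='n] bij_betw_inv_into_right by fastforce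

lemma idx_less[simp]: "idx (i::'n::finite) < CARD('n)"
  using idx_bij[where 'n='n] by (auto simp: bij_betw_def)

lemma uidx_inj: "i < CARD('n) \<Longrightarrow> j < CARD('n) \<Longrightarrow> (uidx i :: 'n::finite) = uidx j \<Longrightarrow> i = j"
  by (metis idx_uidx)

lemma sum_uidx: "(\<Sum>k\<in>{0..<CARD('n)}. f (uidx k :: 'n::finite)) = (\<Sum>i\<in>UNIV. f i)"
  using sum.reindex_bij_betw[OF uidx_bij, of f] by simp

definition cmat :: "real^'n^'m \<Rightarrow> complex^'n^'m" where
  "cmat M = (\<chi> i j. complex_of_real (M$i$j))"

definition jm :: "complex^'n^'n \<Rightarrow> complex mat" where
  "jm M = Matrix.mat CARD('n) CARD('n) (\<lambda>(i,j). M $ uidx i $ uidx j)"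

definition jv :: "complex^'n \<Rightarrow> complex Matrix.vec" where
  "jv v = Matrix.vec CARD('n) (\<lambda>i. v $ uidx i)"

definition vj :: "complex Matrix.vec \<Rightarrow> complex^'n::finite" where
  "vj w = (\<chi> i. vec_index w (idx i))"

lemma jm_carrier[simp]: "jm (M::complex^'n^'n) \<in> carrier_mat CARD('n) CARD('n)"
  by (simp add: jm_def)

lemma jm_dim[simp]: "dim_row (jm (M::complex^'n^'n)) = CARD('n)" "dim_col (jm M) = CARD('n)"
  by (simp_all add: jm_def)

lemma jv_carrier[simp]: "jv (v::complex^'n) \<in> carrier_vec CARD('n)"
  by (simp add: jv_def)

lemma vj_jv[simp]: "vj (jv v) = v"
  by (simp add: vj_def jv_def vec_eq_iff)

lemma jv_vj: "w \<in> carrier_vec CARD('n) \<Longrightarrow> jv (vj w :: complex^'n::finite) = w"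
  by (auto simp: vj_def jv_def)


lemma jv_eq_0: "jv v = 0\<^sub>v CARD('n) \<longleftrightarrow> v = (0::complex^'n::finite)"
proof
  assume "jv v = 0\<^sub>v CARD('n)"
  then have "vj (jv v) = (vj (0\<^sub>v CARD('n)) :: complex^'n)" by simp
  then have "\<forall>i. v $ i = 0" by (auto simp: vj_def vec_eq_iff jv_def fun_eq_iff)
  then show "v = 0" by (simp add: Finite_Cartesian_Product.vec_eq_iff)
qed (auto simp: jv_def)

lemma jm_mult_vec: "jm M *\<^sub>v jv v = jv (M *v v)"
proof (rule eq_vecI)
  fix i assume "i < dim_vec (jv (M *v v))"
  then have i: "i < CARD('a)" by (simp add: jv_def)
  have "vec_index (jm M *\<^sub>v jv v) i = (\<Sum>k\<in>{0..<CARD('a)}. M $ uidx i $ uidx k * v $ uidx k)"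
    using i by (simp add: jm_def jv_def scalar_prod_def Matrix.row_def)
  also have "\<dots> = (\<Sum>j\<in>UNIV. M $ uidx i $ j * v $ j)"
    by (rule sum_uidx)
  also have "\<dots> = vec_index (jv (M *v v)) i"
    using i by (simp add: jv_def matrix_vector_mult_def)
  finally show "vec_index (jm M *\<^sub>v jv v) i = vec_index (jv (M *v v)) i" .
qed (simp add: jv_def jm_def)

lemma jm_mult: "jm (M ** N) = jm M * jm (N::complex^'n^'n)"
proof (rule eq_matI)
  fix i j assume "i < dim_row (jm M * jm N)" "j < dim_col (jm M * jm N)"
  then have i: "i < CARD('n)" and j: "j < CARD('n)" by (auto simp: jm_def)
  have "(jm M * jm N) $$ (i,j) = (\<Sum>k\<in>{0..<CARD('n)}. M $ uidx i $ uidx k * N $ uidx k $ uidx j)"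
    using i j by (simp add: jm_def scalar_prod_def Matrix.row_def Matrix.col_def)
  also have "\<dots> = (\<Sum>k\<in>UNIV. M $ uidx i $ k * N $ k $ uidx j)"
    by (rule sum_uidx)
  also have "\<dots> = jm (M ** N) $$ (i,j)"
    using i j by (simp add: jm_def matrix_matrix_mult_def)
  finally show "jm (M ** N) $$ (i,j) = (jm M * jm N) $$ (i,j)" ..
qed (auto simp: jm_def)

lemma jm_one: "jm (Finite_Cartesian_Product.mat 1 :: complex^'n^'n) = 1\<^sub>m CARD('n)"
  by (rule eq_matI) (auto simp: jm_def Finite_Cartesian_Product.mat_def dest: uidx_inj)

fun mpow :: "real^'n^'n \<Rightarrow> nat \<Rightarrow> real^'n^'n" where
  "mpow M 0 = mat 1"
| "mpow M (Suc k) = mpow M k ** M"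

definition eigs :: "real^'n^'n \<Rightarrow> complex set" where
  "eigs M = {z::complex. det ((mat z :: complex^'n^'n) - (\<chi> i j. complex_of_real (M$i$j))) = 0}"

lemma spectral_radius_eigs: "spectral_radius (M::real^'n^'n) = Sup (cmod ` eigs M)"
  by (simp add: Defs.spectral_radius_def eigs_def)

lemma mat_mult_vec_c: "(mat z :: complex^'n^'n) *v v = z *s v"
proof -
  have "((mat z :: complex^'n^'n) *v v) $ i = (z *s v) $ i" for i
  proof -
    have "((mat z :: complex^'n^'n) *v v) $ i = (\<Sum>j\<in>UNIV. (if i = j then z else 0) * v $ j)"
      unfolding matrix_vector_mult_def Finite_Cartesian_Product.mat_def by simp
    also have "\<dots> = (\<Sum>j\<in>UNIV. if i = j then z * v $ j else 0)"
      by (rule sum.cong) auto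
    also have "\<dots> = z * v $ i" by simp
    finally show ?thesis by simp
  qed
  then show ?thesis by (simp add: Finite_Cartesian_Product.vec_eq_iff)
qed

lemma eigs_iff: "z \<in> eigs (M::real^'n^'n) \<longleftrightarrow> (\<exists>v. v \<noteq> 0 \<and> cmat M *v v = z *s v)"
proof -
  let ?C = "(mat z :: complex^'n^'n) - cmat M"
  have "z \<in> eigs M \<longleftrightarrow> det (matrix ((*v) ?C)) = 0"
    by (simp add: eigs_def cmat_def matrix_of_matrix_vector_mul)
  also have "\<dots> \<longleftrightarrow> \<not> inj ((*v) ?C)"
    using det_nz_iff_inj_gen[OF matrix_vector_mul_linear_gen[of ?C]] by blast
  also have "\<dots> \<longleftrightarrow> (\<exists>v. v \<noteq> 0 \<and> ?C *v v = 0)"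
    using vec.linear_inj_iff_eq_0[OF matrix_vector_mul_linear_gen[of ?C]] by blast
  also have "\<dots> \<longleftrightarrow> (\<exists>v. v \<noteq> 0 \<and> cmat M *v v = z *s v)"
  proof -
    have "?C *v v = 0 \<longleftrightarrow> cmat M *v v = z *s v" for v
    proof -
      have "?C *v v = z *s v - cmat M *v v" by (simp add: matrix_vector_mult_diff_rdistrib mat_mult_vec_c)
      then show ?thesis by (metis right_minus_eq)
    qed
    then show ?thesis by blast
  qed
  finally show ?thesis .
qed

lemma jv_smult: "jv (z *s v) = z \<cdot>\<^sub>v jv v"
  by (auto simp: jv_def)

lemma eigs_spectrum: "eigs M = Spectral_Radius.spectrum (jm (cmat (M::real^'n^'n)))"
proof (rule Set.set_eqI, rule iffI)
  fix z assume "z \<in> eigs M"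
  then obtain v where v: "v \<noteq> 0" "cmat M *v v = z *s v" by (auto simp: eigs_iff)
  have "eigenvector (jm (cmat M)) (jv v) z"
    unfolding eigenvector_def using v jv_eq_0[of v]
    by (auto simp: jm_mult_vec jv_smult)
  then show "z \<in> Spectral_Radius.spectrum (jm (cmat M))" by (auto simp: spectrum_def eigenvalue_def)
next
  fix z assume "z \<in> Spectral_Radius.spectrum (jm (cmat M))"
  then obtain w where w: "eigenvector (jm (cmat M)) w z" by (auto simp: spectrum_def eigenvalue_def)
  then have wc: "w \<in> carrier_vec CARD('n)" and w0: "w \<noteq> 0\<^sub>v CARD('n)"
    and we: "jm (cmat M) *\<^sub>v w = z \<cdot>\<^sub>v w"
    by (auto simp: eigenvector_def jm_def)
  let ?v = "vj w :: complex^'n"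
  have jw: "jv ?v = w" using jv_vj[OF wc] .
  have "?v \<noteq> 0" using w0 jw jv_eq_0[of ?v] by auto
  moreover have "jv (cmat M *v ?v) = jv (z *s ?v)"
    using we jw by (metis jm_mult_vec jv_smult)
  then have "cmat M *v ?v = z *s ?v" by (metis vj_jv)
  ultimately show "z \<in> eigs M" by (auto simp: eigs_iff)
qed

lemma eigs_finite: "finite (eigs (M::real^'n^'n))"
  unfolding eigs_spectrum by (rule card_finite_spectrum(1)[OF jm_carrier])

lemma eigs_nonempty: "eigs (M::real^'n^'n) \<noteq> {}"
  unfolding eigs_spectrum by (rule spectrum_non_empty[OF jm_carrier]) simp

lemma rho_less_1_iff: "spectral_radius (M::real^'n^'n) < 1 \<longleftrightarrow> (\<forall>z\<in>eigs M. cmod z < 1)"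
proof -
  have "spectral_radius M = Max (cmod ` eigs M)"
    unfolding spectral_radius_eigs using eigs_finite[of M] eigs_nonempty[of M]
    by (intro cSup_eq_Max) auto
  then show ?thesis using eigs_finite[of M] eigs_nonempty[of M] by simp
qed

lemma cmat_mult: "cmat (X ** Y) = cmat X ** cmat (Y::real^'n^'n)"
  by (simp add: cmat_def matrix_matrix_mult_def Finite_Cartesian_Product.vec_eq_iff)

lemma jm_cmat_pow: "jm (cmat (mpow (M::real^'n^'n) k)) = jm (cmat M) ^\<^sub>m k"
proof (induction k)
  case 0
  have "cmat (mat 1 :: real^'n^'n) = mat 1"
    by (simp add: cmat_def Finite_Cartesian_Product.mat_def Finite_Cartesian_Product.vec_eq_iff)
  then show ?case by (simp add: jm_one)
next
  case (Suc k)
  then show ?case by (simp add: cmat_mult jm_mult)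
qed

lemma mpow_scale: "mpow (c *\<^sub>R M) k = (c ^ k) *\<^sub>R mpow M k"
  by (induction k) (simp_all add: matrix_scalar_ac scalar_matrix_assoc)

lemma stable_bound:
  assumes "spectral_radius (M::real^'n^'n) < 1"
  shows "\<exists>c r. 0 < r \<and> r < 1 \<and> (\<forall>k i j. \<bar>mpow M k $ i $ j\<bar> \<le> c * r^k)"
proof -
  let ?E = "cmod ` eigs M"
  define \<rho> where "\<rho> = Max ?E"
  have fin: "finite ?E" using eigs_finite by blast
  have ne: "?E \<noteq> {}" using eigs_nonempty by blast
  have \<rho>1: "\<rho> < 1" using assms rho_less_1_iff[of M] fin ne by (simp add: \<rho>_def)
  obtain z0 where "z0 \<in> eigs M" using eigs_nonempty by blast
  then have "cmod z0 \<le> \<rho>" using fin by (simp add: \<rho>_def)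
  then have \<rho>0: "0 \<le> \<rho>" by (meson norm_ge_zero order_trans)
  define r where "r = (1 + \<rho>) / 2"
  have r0: "0 < r" and r1: "r < 1" and r\<rho>: "\<rho> < r" using \<rho>0 \<rho>1 by (auto simp: r_def)
  define M' where "M' = (1/r) *\<^sub>R M"
  have sub: "\<forall>z\<in>eigs M'. cmod z < 1"
  proof
    fix z assume "z \<in> eigs M'"
    then obtain v where v0: "v \<noteq> 0" and v: "cmat M' *v v = z *s v" by (auto simp: eigs_iff)
    have "cmat M' *v v = complex_of_real (1/r) *s (cmat M *v v)"
      by (simp add: cmat_def M'_def matrix_vector_mult_def Finite_Cartesian_Product.vec_eq_iff
          sum_distrib_left algebra_simps)
    with v have "complex_of_real r *s (complex_of_real (1/r) *s (cmat M *v v)) = complex_of_real r *s (z *s v)"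
      by simp
    then have "cmat M *v v = (complex_of_real r * z) *s v"
      using r0 by (simp add: vector_smult_assoc)
    then have "complex_of_real r * z \<in> eigs M" using v0 by (auto simp: eigs_iff)
    then have "cmod (complex_of_real r * z) \<le> \<rho>" using fin by (simp add: \<rho>_def)
    moreover have "cmod (complex_of_real r * z) = r * cmod z" using r0 by (simp add: norm_mult)
    ultimately have "r * cmod z < r * 1" using r\<rho> by linarith
    then show "cmod z < 1" using r0 by (rule mult_left_less_imp_less[OF _ less_imp_le])
  qed
  have jnf: "Spectral_Radius.spectral_radius (jm (cmat M')) < 1"
    unfolding Spectral_Radius.spectral_radius_def eigs_spectrum[symmetric]
    using sub eigs_finite[of M'] eigs_nonempty[of M'] by simp
  obtain c where c: "\<And>k. norm_bound (jm (cmat M') ^\<^sub>m k) c"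
    using spectral_radius_jnf_norm_bound_less_1_upper_triangular[OF jm_carrier jnf] by blast
  have "\<bar>mpow M k $ i $ j\<bar> \<le> c * r^k" for k i j
  proof -
    have "norm (jm (cmat (mpow M' k)) $$ (idx i, idx j)) \<le> c"
      using c[of k] unfolding jm_cmat_pow[symmetric] norm_bound_def by simp
    then have "\<bar>mpow M' k $ i $ j\<bar> \<le> c" by (simp add: jm_def cmat_def)
    then have "(1/r)^k * \<bar>mpow M k $ i $ j\<bar> \<le> c"
      using r0 by (simp add: M'_def mpow_scale abs_mult)
    then have "(1/r)^k * \<bar>mpow M k $ i $ j\<bar> * r^k \<le> c * r^k"
      using r0 by (simp add: mult_right_mono)
    then show ?thesis using r0 by (simp add: power_one_over field_simps)
  qed
  then show ?thesis using r0 r1 by blast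
qed

lemma cmat_mpow_eig:
  assumes "cmat (M::real^'n^'n) *v v = z *s v"
  shows "cmat (mpow M k) *v v = (z^k) *s v"
proof (induction k)
  case 0
  have "cmat (mat 1 :: real^'n^'n) = mat 1"
    by (simp add: cmat_def Finite_Cartesian_Product.mat_def Finite_Cartesian_Product.vec_eq_iff)
  then show ?case by simp
next
  case (Suc k)
  have "cmat (mpow M (Suc k)) *v v = cmat (mpow M k) *v (cmat M *v v)"
    by (simp add: cmat_mult matrix_vector_mul_assoc)
  also have "\<dots> = (z^Suc k) *s v" using assms Suc by (simp add: vector_scalar_commute vector_smult_assoc mult.commute)
  finally show ?case .
qed

lemma small_power_stable:
  assumes N: "N > 0" and small: "\<forall>i j. \<bar>mpow (M::real^'n^'n) N $ i $ j\<bar> < 1 / real CARD('n)"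
  shows "\<forall>z\<in>eigs M. cmod z < 1"
proof
  fix z assume "z \<in> eigs M"
  then obtain v where v0: "v \<noteq> 0" and v: "cmat M *v v = z *s v" by (auto simp: eigs_iff)
  let ?P = "mpow M N"
  define m where "m = Max (range (\<lambda>j. cmod (v$j)))"
  have "m \<in> range (\<lambda>j. cmod (v$j))" unfolding m_def by (rule Max_in) auto
  then obtain i where i: "cmod (v$i) = m" by auto
  have mge: "cmod (v$j) \<le> cmod (v$i)" for j using i unfolding m_def by (simp add: Max_ge)
  have vi: "cmod (v$i) > 0"
  proof (rule ccontr)
    assume "\<not> cmod (v$i) > 0"
    then have "\<forall>j. v$j = 0" using mge by (metis norm_ge_zero norm_le_zero_iff order_trans not_less)
    then have "v = 0" by (simp add: Finite_Cartesian_Product.vec_eq_iff)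
    with v0 show False by simp
  qed
  define e where "e = Max (range (\<lambda>j. \<bar>?P$i$j\<bar>))"
  have e1: "e < 1 / real CARD('n)" unfolding e_def using small by (simp add: Max_less_iff)
  have e2: "\<bar>?P$i$j\<bar> \<le> e" for j unfolding e_def by (rule Max_ge) auto
  have "cmod (z^N) * cmod (v$i) = cmod ((cmat ?P *v v) $ i)"
    using cmat_mpow_eig[OF v, of N] by (simp add: norm_mult)
  also have "\<dots> = cmod (\<Sum>j\<in>UNIV. complex_of_real (?P$i$j) * v$j)"
    by (simp add: cmat_def matrix_vector_mult_def)
  also have "\<dots> \<le> (\<Sum>j\<in>UNIV. \<bar>?P$i$j\<bar> * cmod (v$j))"
    by (rule order_trans[OF norm_sum]) (simp add: norm_mult)
  also have "\<dots> \<le> (\<Sum>j\<in>UNIV. \<bar>?P$i$j\<bar> * cmod (v$i))"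
    by (intro sum_mono mult_left_mono mge) simp
  also have "\<dots> \<le> (\<Sum>j\<in>(UNIV::'n set). e * cmod (v$i))"
    by (intro sum_mono mult_right_mono e2) simp
  also have "\<dots> = (real CARD('n) * e) * cmod (v$i)" by simp
  also have "\<dots> < 1 * cmod (v$i)"
  proof (rule mult_strict_right_mono[OF _ vi])
    show "real CARD('n) * e < 1" using e1 by (simp add: less_divide_eq mult.commute)
  qed
  also have "\<dots> = cmod (v$i)" by simp
  finally have "cmod z ^ N < 1" using vi by (simp add: norm_power)
  then show "cmod z < 1"
    by (meson less_le_not_le one_le_power not_le)
qed

lemma stab_set_char:
  fixes A :: "real^'n^'n" and B :: "real^'p^'n"
  shows "stab_set A B = {K. \<exists>N>0. \<forall>i j. \<bar>mpow (A - B ** K) N $ i $ j\<bar> < 1 / real CARD('n)}"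
proof (rule Set.set_eqI, rule iffI)
  fix K assume "K \<in> stab_set A B"
  then have "spectral_radius (A - B ** K) < 1" by (simp add: stab_set_def)
  from stable_bound[OF this] obtain c r where r: "0 < r" "r < 1"
    and b: "\<And>k i j. \<bar>mpow (A - B ** K) k $ i $ j\<bar> \<le> c * r^k" by blast
  have "(\<lambda>k. c * r^k) \<longlonglongrightarrow> c * 0"
    by (intro tendsto_mult tendsto_const LIMSEQ_realpow_zero) (use r in auto)
  then have "eventually (\<lambda>k. c * r^k < 1 / real CARD('n)) sequentially"
    by (intro order_tendstoD(2)) (auto simp: finite_UNIV_card_ge_0)
  then obtain N0 where N0: "\<And>k. k \<ge> N0 \<Longrightarrow> c * r^k < 1 / real CARD('n)"
    by (auto simp: eventually_sequentially)
  have "\<forall>i j. \<bar>mpow (A - B ** K) (Suc N0) $ i $ j\<bar> < 1 / real CARD('n)"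
    using b N0[of "Suc N0"] by (meson le_less_trans le_SucI order_refl)
  then show "K \<in> {K. \<exists>N>0. \<forall>i j. \<bar>mpow (A - B ** K) N $ i $ j\<bar> < 1 / real CARD('n)}"
    by blast
next
  fix K assume "K \<in> {K. \<exists>N>0. \<forall>i j. \<bar>mpow (A - B ** K) N $ i $ j\<bar> < 1 / real CARD('n)}"
  then obtain N where "N > 0" "\<forall>i j. \<bar>mpow (A - B ** K) N $ i $ j\<bar> < 1 / real CARD('n)" by auto
  from small_power_stable[OF this] show "K \<in> stab_set A B"
    by (simp add: stab_set_def rho_less_1_iff)
qed

lemma cont_entry: "continuous_on UNIV (\<lambda>K::real^'a^'b. K $ m $ j)"
proof -
  have "bounded_linear (\<lambda>K::real^'a^'b. K $ m $ j)"
    using bounded_linear_compose[OF bounded_linear_vec_nth[of j] bounded_linear_vec_nth[of m]]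
    by (simp add: o_def)
  then show ?thesis by (rule linear_continuous_on)
qed

lemma cont_mpow: "continuous_on UNIV (\<lambda>K. mpow (A - B ** (K::real^'n^'p)) N $ i $ j)"
proof (induction N arbitrary: i j)
  case 0
  then show ?case by simp
next
  case (Suc N)
  have eq: "(\<lambda>K. mpow (A - B ** K) (Suc N) $ i $ j) =
     (\<lambda>K. \<Sum>l\<in>UNIV. mpow (A - B ** K) N $ i $ l * (A $ l $ j - (\<Sum>m\<in>UNIV. B $ l $ m * K $ m $ j)))"
    by (simp add: matrix_matrix_mult_def)
  show ?case unfolding eq
    by (intro continuous_intros Suc cont_entry)
qed

lemma open_stab_set: "open (stab_set (A::real^'n^'n) (B::real^'p^'n))"
proof -
  have eq: "stab_set A B = (\<Union>N\<in>{0<..}. \<Inter>i\<in>UNIV. \<Inter>j\<in>UNIV.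
      {K. \<bar>mpow (A - B ** K) N $ i $ j\<bar> < 1 / real CARD('n)})"
    unfolding stab_set_char by auto
  show ?thesis unfolding eq
    by (intro open_UN ballI open_INT finite_UNIV open_Collect_less continuous_intros cont_mpow) auto
qed




declare transpose_matrix_vector[simp del]

lemma dot_transpose: "(x::real^'n) \<bullet> ((B::real^'m^'n) *v y) = (transpose B *v x) \<bullet> y"
proof -
  have "x \<bullet> (B *v y) = (\<Sum>i\<in>UNIV. \<Sum>j\<in>UNIV. x$i * B$i$j * y$j)"
    by (simp add: inner_vec_def matrix_vector_mult_def sum_distrib_left mult.assoc)
  also have "\<dots> = (\<Sum>j\<in>UNIV. \<Sum>i\<in>UNIV. x$i * B$i$j * y$j)" by (rule sum.swap)
  also have "\<dots> = (transpose B *v x) \<bullet> y"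
    by (simp add: inner_vec_def matrix_vector_mult_def transpose_def sum_distrib_left sum_distrib_right mult_ac)
  finally show ?thesis .
qed

lemma sym_dot: "transpose S = S \<Longrightarrow> (x::real^'n) \<bullet> (S *v y) = y \<bullet> (S *v x)"
  by (metis dot_transpose inner_commute)

lemma quad_expand:
  fixes S :: "real^'n^'n"
  assumes "transpose S = S"
  shows "(x + t *\<^sub>R y) \<bullet> (S *v (x + t *\<^sub>R y)) =
     x \<bullet> (S *v x) + 2 * t * (x \<bullet> (S *v y)) + t^2 * (y \<bullet> (S *v y))"
proof -
  have "y \<bullet> (S *v x) = x \<bullet> (S *v y)" using sym_dot[OF assms] by simp
  then show ?thesis
    by (simp add: matrix_vector_right_distrib inner_add_left inner_add_right
        matrix_scaleR_vector_ac scaleR_matrix_vector_assoc[symmetric] power2_eq_square algebra_simps)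
qed

lemma discr:
  fixes a b c :: real
  assumes "\<And>t. 0 \<le> a + 2 * t * b + t^2 * c" and "0 \<le> c"
  shows "b^2 \<le> a * c"
proof (cases "c = 0")
  case True
  have "b = 0"
  proof (rule ccontr)
    assume "b \<noteq> 0"
    have "0 \<le> a + 2 * (- (a + 1) / (2 * b)) * b" using assms(1)[of "- (a + 1) / (2 * b)"] True by simp
    also have "\<dots> = -1" using \<open>b \<noteq> 0\<close> by (simp add: field_simps)
    finally show False by simp
  qed
  then show ?thesis using True by simp
next
  case False
  then have c: "c > 0" using assms(2) by simp
  have "0 \<le> a + 2 * (- b / c) * b + (- b / c)^2 * c" using assms(1) by blast
  also have "\<dots> = a - b^2 / c" using c by (simp add: field_simps power2_eq_square)
  finally have "b^2 / c \<le> a" by simp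
  then show ?thesis using c by (simp add: field_simps mult.commute)
qed

lemma psd_cs:
  assumes "pos_semidef S"
  shows "(x \<bullet> (S *v y))^2 \<le> (x \<bullet> (S *v x)) * (y \<bullet> (S *v (y::real^'n)))"
proof (rule discr)
  have sym: "transpose S = S" using assms by (simp add: pos_semidef_def sym_mat_def)
  fix t
  have "0 \<le> (x + t *\<^sub>R y) \<bullet> (S *v (x + t *\<^sub>R y))" using assms unfolding pos_semidef_def by blast
  then show "0 \<le> x \<bullet> (S *v x) + 2 * t * (x \<bullet> (S *v y)) + t^2 * (y \<bullet> (S *v y))"
    using quad_expand[OF sym, of x t y] by linarith
next
  show "0 \<le> y \<bullet> (S *v y)" using assms by (simp add: pos_semidef_def)
qed

lemma entry_dot: "(S::real^'n^'n) $ a $ b = axis a 1 \<bullet> (S *v axis b 1)"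
  by (simp add: inner_axis' matrix_vector_mult_basis column_def)

lemma psd_trace_nonneg:
  assumes P: "pos_semidef (P::real^'n^'n)"
  shows "pos_semidef S \<Longrightarrow> trace (P ** S) \<ge> 0"
proof (induction "card {j. S$j \<noteq> 0}" arbitrary: S rule: less_induct)
  case less
  have symS: "transpose S = S" using less.prems by (simp add: pos_semidef_def sym_mat_def)
  have Sab: "S$a$b = S$b$a" for a b
  proof -
    have "transpose S $ a $ b = S $ a $ b" using symS by simp
    then show ?thesis by (simp add: transpose_def)
  qed
  have diag: "S$i$i \<ge> 0" for i
    using less.prems entry_dot[of S i i] by (simp add: pos_semidef_def)
  show ?case
  proof (cases "\<forall>i. S$i$i = 0")
    case True
    have "S$a$b = 0" for a b
    proof -
      have "(S$a$b)^2 \<le> S$a$a * S$b$b"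
        using psd_cs[OF less.prems, of "axis a 1" "axis b 1"] by (simp add: entry_dot[symmetric])
      then show ?thesis using True by simp
    qed
    then have "S = 0" by (simp add: Finite_Cartesian_Product.vec_eq_iff)
    then show ?thesis by (simp add: trace_def matrix_matrix_mult_def)
  next
    case False
    then obtain i where "S$i$i \<noteq> 0" by blast
    with diag[of i] have d: "S$i$i > 0" by linarith
    define d where "d = S$i$i"
    define u where "u = (\<chi> a. S$a$i)"
    define Om where "Om = ((\<chi> a b. u$a * u$b) :: real^'n^'n)"
    define S' where "S' = S - (1/d) *\<^sub>R Om"
    have d0: "d > 0" using d by (simp add: d_def)
    have ux: "u \<bullet> x = x \<bullet> (S *v axis i 1)" for x
      by (simp add: u_def inner_vec_def matrix_vector_mult_basis column_def mult.commute)
    have Ox: "x \<bullet> (Om *v x) = (u \<bullet> x)^2" for x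
      by (simp add: Om_def inner_vec_def matrix_vector_mult_def power2_eq_square sum_distrib_left
          sum_distrib_right mult_ac)
    have symS': "transpose S' = S'"
      using symS by (simp add: S'_def Om_def transpose_def Finite_Cartesian_Product.vec_eq_iff mult.commute)
    have psdS': "pos_semidef S'"
    proof -
      have "x \<bullet> (S' *v x) \<ge> 0" for x
      proof -
        have cs: "(x \<bullet> (S *v axis i 1))^2 \<le> (x \<bullet> (S *v x)) * d"
          using psd_cs[OF less.prems, of x "axis i 1"] by (simp add: d_def entry_dot[symmetric])
        have "x \<bullet> (S' *v x) = x \<bullet> (S *v x) - (1/d) * (u \<bullet> x)^2"
          by (simp add: S'_def matrix_vector_mult_diff_rdistrib inner_diff_right Ox
              scaleR_matrix_vector_assoc[symmetric])
        also have "\<dots> \<ge> 0" using cs d0 by (simp add: ux field_simps)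
        finally show ?thesis .
      qed
      then show ?thesis using symS' by (simp add: pos_semidef_def sym_mat_def)
    qed
    have rows: "{j. S'$j \<noteq> 0} \<subset> {j. S$j \<noteq> 0}"
    proof
      show "{j. S'$j \<noteq> 0} \<subseteq> {j. S$j \<noteq> 0}"
      proof
        fix j assume "j \<in> {j. S'$j \<noteq> 0}"
        then have "S'$j \<noteq> 0" by simp
        show "j \<in> {j. S$j \<noteq> 0}"
        proof (rule ccontr)
          assume "j \<notin> {j. S$j \<noteq> 0}"
          then have "S$j = 0" by simp
          then have "\<And>b. S$j$b = 0" by simp
          then have "S'$j = 0"
            by (simp add: S'_def Om_def u_def Finite_Cartesian_Product.vec_eq_iff)
          with \<open>S'$j \<noteq> 0\<close> show False by simp
        qed
      qed
      have "S'$i$b = 0" for b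
      proof -
        have "S'$i$b = S$i$b - (1/d) * (S$i$i * S$b$i)" by (simp add: S'_def Om_def u_def)
        also have "\<dots> = S$i$b - S$b$i" using d0 by (simp add: d_def)
        also have "\<dots> = 0" using Sab[of i b] by simp
        finally show ?thesis .
      qed
      then have "S'$i = 0" by (simp add: Finite_Cartesian_Product.vec_eq_iff)
      moreover have "S$i \<noteq> 0"
      proof
        assume "S$i = 0"
        then have "S$i$i = 0" by simp
        with d show False by simp
      qed
      ultimately show "{j. S'$j \<noteq> 0} \<noteq> {j. S$j \<noteq> 0}" by blast
    qed
    have IH: "trace (P ** S') \<ge> 0"
      by (rule less.hyps[OF psubset_card_mono[OF _ rows] psdS']) simp
    have "trace (P ** Om) = u \<bullet> (P *v u)"
      by (simp add: trace_def matrix_matrix_mult_def Om_def inner_vec_def matrix_vector_mult_def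
          sum_distrib_left mult_ac)
    then have PO: "trace (P ** Om) \<ge> 0" using P by (simp add: pos_semidef_def)
    have "S = S' + (1/d) *\<^sub>R Om" by (simp add: S'_def)
    then have "trace (P ** S) = trace (P ** S') + trace (P ** ((1/d) *\<^sub>R Om))"
      by (simp add: matrix_add_ldistrib trace_add)
    moreover have "trace (P ** ((1/d) *\<^sub>R Om)) = (1/d) * trace (P ** Om)"
      by (simp add: trace_def matrix_matrix_mult_def sum_distrib_left mult_ac)
    ultimately have "trace (P ** S) = trace (P ** S') + (1/d) * trace (P ** Om)" by simp
    then show ?thesis using IH PO d0 by simp
  qed
qed





lemma mm_add_r: "((A::real^'m^'n) + B) ** (C::real^'k^'m) = A ** C + B ** C"
  by (simp add: matrix_matrix_mult_def Finite_Cartesian_Product.vec_eq_iff sum.distrib algebra_simps)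

lemma mm_diff_r: "((A::real^'m^'n) - B) ** (C::real^'k^'m) = A ** C - B ** C"
  by (simp add: matrix_matrix_mult_def Finite_Cartesian_Product.vec_eq_iff sum_subtractf algebra_simps)

lemma mm_diff_l: "(C::real^'m^'n) ** (A - B) = C ** A - C ** (B::real^'k^'m)"
  by (simp add: matrix_matrix_mult_def Finite_Cartesian_Product.vec_eq_iff sum_subtractf algebra_simps)

lemma mm_scale_l: "(c *\<^sub>R (A::real^'m^'n)) ** (B::real^'k^'m) = c *\<^sub>R (A ** B)"
  by (simp add: matrix_matrix_mult_def Finite_Cartesian_Product.vec_eq_iff sum_distrib_left mult.assoc)

lemma mm_scale_r: "(A::real^'m^'n) ** (c *\<^sub>R (B::real^'k^'m)) = c *\<^sub>R (A ** B)"
  by (simp add: matrix_matrix_mult_def Finite_Cartesian_Product.vec_eq_iff sum_distrib_left mult_ac)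

lemma transpose_add': "transpose ((A::real^'m^'n) + B) = transpose A + transpose B"
  by (simp add: transpose_def Finite_Cartesian_Product.vec_eq_iff)

lemma mpow_commute: "mpow M k ** M = M ** mpow M k"
proof (induction k)
  case 0
  then show ?case by simp
next
  case (Suc k)
  have "mpow M (Suc k) ** M = (mpow M k ** M) ** M" by simp
  also have "\<dots> = (M ** mpow M k) ** M" using Suc by simp
  also have "\<dots> = M ** (mpow M k ** M)" by (simp add: matrix_mul_assoc)
  finally show ?case by simp
qed

definition Tm :: "real^'n^'n \<Rightarrow> real^'n^'n \<Rightarrow> nat \<Rightarrow> real^'n^'n" where
  "Tm M X k = mpow M k ** X ** transpose (mpow M k)"

lemma Tm_0: "Tm M X 0 = X" by (simp add: Tm_def)

lemma Tm_Suc: "Tm M X (Suc k) = M ** Tm M X k ** transpose M"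
proof -
  have "Tm M X (Suc k) = (M ** mpow M k) ** X ** (transpose (mpow M k) ** transpose M)"
    by (simp add: Tm_def mpow_commute matrix_transpose_mul)
  also have "\<dots> = M ** Tm M X k ** transpose M" by (simp add: Tm_def matrix_mul_assoc)
  finally show ?thesis .
qed

lemma sandwich_entry:
  "((P::real^'n^'n) ** Y ** transpose P) $ i $ j = (\<Sum>b\<in>UNIV. \<Sum>a\<in>UNIV. P$i$a * Y$a$b * P$j$b)"
  by (simp add: matrix_matrix_mult_def transpose_def sum_distrib_right)

lemma sandwich_bound:
  assumes e: "\<And>a b. \<bar>(P::real^'n^'n)$a$b\<bar> \<le> e"
  shows "\<bar>(P ** Y ** transpose P) $ i $ j\<bar> \<le> e^2 * (\<Sum>a\<in>UNIV. \<Sum>b\<in>UNIV. \<bar>Y$a$b\<bar>)"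
proof -
  have e0: "0 \<le> e" using e[of i i] by linarith
  have "\<bar>(P ** Y ** transpose P) $ i $ j\<bar> \<le> (\<Sum>b\<in>UNIV. \<bar>\<Sum>a\<in>UNIV. P$i$a * Y$a$b * P$j$b\<bar>)"
    unfolding sandwich_entry by (rule sum_abs)
  also have "\<dots> \<le> (\<Sum>b\<in>UNIV. \<Sum>a\<in>UNIV. \<bar>P$i$a * Y$a$b * P$j$b\<bar>)"
    by (intro sum_mono sum_abs)
  also have "\<dots> \<le> (\<Sum>b\<in>UNIV. \<Sum>a\<in>UNIV. e^2 * \<bar>Y$a$b\<bar>)"
  proof (intro sum_mono)
    fix a b
    have "\<bar>P$i$a\<bar> * \<bar>Y$a$b\<bar> \<le> e * \<bar>Y$a$b\<bar>" by (intro mult_right_mono e) simp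
    then have "\<bar>P$i$a\<bar> * \<bar>Y$a$b\<bar> * \<bar>P$j$b\<bar> \<le> e * \<bar>Y$a$b\<bar> * e"
      by (intro mult_mono e) (use e0 in auto)
    then show "\<bar>P$i$a * Y$a$b * P$j$b\<bar> \<le> e^2 * \<bar>Y$a$b\<bar>"
      by (simp add: abs_mult power2_eq_square mult_ac)
  qed
  also have "\<dots> = e^2 * (\<Sum>b\<in>UNIV. \<Sum>a\<in>UNIV. \<bar>Y$a$b\<bar>)"
    by (simp add: sum_distrib_left)
  also have "(\<Sum>b\<in>UNIV. \<Sum>a\<in>UNIV. \<bar>Y$a$b\<bar>) = (\<Sum>a\<in>UNIV. \<Sum>b\<in>UNIV. \<bar>Y$a$b\<bar>)"
    by (rule sum.swap)
  finally show ?thesis .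
qed

lemma norm_mat_le: "norm (Y::real^'n^'m) \<le> (\<Sum>i\<in>UNIV. \<Sum>j\<in>UNIV. \<bar>Y$i$j\<bar>)"
proof -
  have "norm Y \<le> (\<Sum>i\<in>UNIV. norm (Y$i))" unfolding norm_vec_def by (rule L2_set_le_sum) simp
  also have "\<dots> \<le> (\<Sum>i\<in>UNIV. \<Sum>j\<in>UNIV. \<bar>Y$i$j\<bar>)" by (intro sum_mono norm_le_l1_cart)
  finally show ?thesis .
qed

lemma bl_entry: "bounded_linear (\<lambda>K::real^'a^'b. K $ m $ j)"
  using bounded_linear_compose[OF bounded_linear_vec_nth[of j] bounded_linear_vec_nth[of m]]
  by (simp add: o_def)

lemma suminf_entry: "summable (f::nat \<Rightarrow> real^'a^'b) \<Longrightarrow> suminf f $ m $ j = (\<Sum>k. f k $ m $ j)"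
  using bounded_linear.suminf[OF bl_entry, of f m j] by simp

lemma summable_entry: "summable (f::nat \<Rightarrow> real^'a^'b) \<Longrightarrow> summable (\<lambda>k. f k $ m $ j)"
  using bounded_linear.summable[OF bl_entry, of f m j] by simp

lemma sandwich_bl: "bounded_linear (\<lambda>Y::real^'n^'n. M ** Y ** transpose M)"
  unfolding linear_conv_bounded_linear[symmetric]
  by (rule linearI) (simp_all add: mm_add_r matrix_add_ldistrib mm_scale_l mm_scale_r)

lemma bl_trace: "bounded_linear (trace :: real^'n^'n \<Rightarrow> real)"
  unfolding linear_conv_bounded_linear[symmetric]
  by (rule linearI) (simp_all add: trace_add trace_def sum_distrib_left)

lemma bl_quad: "bounded_linear (\<lambda>Y::real^'n^'n. x \<bullet> (Y *v x))"
  unfolding linear_conv_bounded_linear[symmetric]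
  by (rule linearI) (simp_all add: matrix_vector_mult_add_rdistrib inner_add_right
      scaleR_matrix_vector_assoc[symmetric])

definition Fr :: "real^'n^'n \<Rightarrow> real" where
  "Fr P = (\<Sum>i\<in>UNIV. \<Sum>j\<in>UNIV. (P$i$j)^2)"

lemma Fr_nonneg: "Fr P \<ge> 0" unfolding Fr_def by (intro sum_nonneg) simp

lemma Fr_entry: "(P$i$j)^2 \<le> Fr P"
proof -
  have "(P$i$j)^2 \<le> (\<Sum>j\<in>UNIV. (P$i$j)^2)" by (rule member_le_sum) auto
  also have "\<dots> \<le> Fr P" unfolding Fr_def by (rule member_le_sum) (auto intro: sum_nonneg)
  finally show ?thesis .
qed

lemma sandwich_diag: "((P::real^'n^'n) ** X ** transpose P) $ i $ i = (P$i) \<bullet> (X *v (P$i))"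
proof -
  have "(P ** X ** transpose P) $ i $ i = (\<Sum>b\<in>UNIV. \<Sum>a\<in>UNIV. P$i$a * X$a$b * P$i$b)"
    by (rule sandwich_entry)
  also have "\<dots> = (\<Sum>a\<in>UNIV. \<Sum>b\<in>UNIV. P$i$a * X$a$b * P$i$b)" by (rule sum.swap)
  also have "\<dots> = (P$i) \<bullet> (X *v (P$i))"
    by (simp add: inner_vec_def matrix_vector_mult_def sum_distrib_left mult.assoc)
  finally show ?thesis .
qed

lemma trace_Tm_lower:
  assumes "\<And>x. s0 * (x \<bullet> x) \<le> x \<bullet> (X *v x)"
  shows "trace (Tm M X k) \<ge> s0 * Fr (mpow M k)"
proof -
  let ?P = "mpow M k"
  have "trace (Tm M X k) = (\<Sum>i\<in>UNIV. (?P$i) \<bullet> (X *v (?P$i)))"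
    by (simp add: trace_def Tm_def sandwich_diag)
  also have "\<dots> \<ge> (\<Sum>i\<in>UNIV. s0 * ((?P$i) \<bullet> (?P$i)))" by (intro sum_mono assms)
  also have "(\<Sum>i\<in>UNIV. s0 * ((?P$i) \<bullet> (?P$i))) = s0 * Fr ?P"
    by (simp add: Fr_def inner_vec_def power2_eq_square sum_distrib_left)
  finally show ?thesis .
qed

lemma quad_Tm: "x \<bullet> (Tm M X k *v x) = (transpose (mpow M k) *v x) \<bullet> (X *v (transpose (mpow M k) *v x))"
proof -
  have "Tm M X k *v x = mpow M k *v (X *v (transpose (mpow M k) *v x))"
    by (simp add: Tm_def matrix_vector_mul_assoc matrix_mul_assoc)
  then show ?thesis by (simp add: dot_transpose)
qed

lemma Tm_sym: "transpose X = X \<Longrightarrow> transpose (Tm M X k) = Tm M X k"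
  by (simp add: Tm_def matrix_transpose_mul matrix_mul_assoc)

context
  fixes M :: "real^'n^'n" and c r :: real
  assumes r0: "0 < r" and r1: "r < 1"
    and bnd: "\<And>k i j. \<bar>mpow M k $ i $ j\<bar> \<le> c * r^k"
begin

lemma r2: "r^2 < 1" "0 \<le> r^2"
  using power_strict_mono[OF r1, of 2] r0 by auto

lemma Tm_entry_bound:
  "\<bar>Tm M X k $ i $ j\<bar> \<le> (c^2 * (\<Sum>a\<in>UNIV. \<Sum>b\<in>UNIV. \<bar>X$a$b\<bar>)) * (r^2)^k"
proof -
  have "\<bar>Tm M X k $ i $ j\<bar> \<le> (c * r^k)^2 * (\<Sum>a\<in>UNIV. \<Sum>b\<in>UNIV. \<bar>X$a$b\<bar>)"
    unfolding Tm_def by (rule sandwich_bound[OF bnd])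
  also have "(c * r^k)^2 = c^2 * (r^2)^k"
    by (simp add: power_mult_distrib flip: power_mult) (simp add: mult.commute)
  finally show ?thesis by (simp add: mult_ac)
qed

lemma Tm_summable: "summable (Tm M X)"
proof (rule summable_comparison_test')
  let ?C = "c^2 * (\<Sum>a\<in>UNIV. \<Sum>b\<in>UNIV. \<bar>X$a$b\<bar>)"
  show "summable (\<lambda>k. real CARD('n) * real CARD('n) * ?C * (r^2)^k)"
    by (intro summable_mult summable_geometric) (use r2 in simp)
  fix k :: nat
  have "norm (Tm M X k) \<le> (\<Sum>i\<in>UNIV. \<Sum>j\<in>UNIV. \<bar>Tm M X k $ i $ j\<bar>)" by (rule norm_mat_le)
  also have "\<dots> \<le> (\<Sum>i\<in>(UNIV::'n set). \<Sum>j\<in>(UNIV::'n set). ?C * (r^2)^k)"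
    by (intro sum_mono Tm_entry_bound)
  also have "\<dots> = real CARD('n) * real CARD('n) * ?C * (r^2)^k" by (simp add: mult_ac)
  finally show "norm (Tm M X k) \<le> real CARD('n) * real CARD('n) * ?C * (r^2)^k" .
qed

lemma Tm_fix: "suminf (Tm M X) = X + M ** suminf (Tm M X) ** transpose M"
proof -
  have s: "summable (Tm M X)" by (rule Tm_summable)
  have "(\<Sum>k. Tm M X (Suc k)) = suminf (Tm M X) - Tm M X 0" by (rule suminf_split_head[OF s])
  moreover have "(\<Sum>k. Tm M X (Suc k)) = M ** suminf (Tm M X) ** transpose M"
    unfolding Tm_Suc using bounded_linear.suminf[OF sandwich_bl s, of M] by simp
  ultimately show ?thesis by (simp add: Tm_0)
qed

lemma fix_unique:
  assumes Y: "Y = X + M ** Y ** transpose M" and Z: "Z = X + M ** Z ** transpose M"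
  shows "Y = Z"
proof -
  define D where "D = Y - Z"
  have D: "M ** D ** transpose M = D"
  proof -
    have "M ** D ** transpose M = M ** Y ** transpose M - M ** Z ** transpose M"
      by (simp add: D_def mm_diff_l mm_diff_r)
    also have "\<dots> = D" using Y Z unfolding D_def by (metis add_diff_cancel_left)
    finally show ?thesis .
  qed
  have Dk: "Tm M D k = D" for k
    by (induction k) (simp_all add: Tm_0 Tm_Suc D)
  have "D $ i $ j = 0" for i j
  proof -
    let ?C = "c^2 * (\<Sum>a\<in>UNIV. \<Sum>b\<in>UNIV. \<bar>D$a$b\<bar>)"
    have le: "\<bar>D$i$j\<bar> \<le> ?C * (r^2)^k" for k using Tm_entry_bound[of D k i j] Dk[of k] by simp
    have "(\<lambda>k. ?C * (r^2)^k) \<longlonglongrightarrow> ?C * 0"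
      by (intro tendsto_mult tendsto_const LIMSEQ_realpow_zero) (use r2 in auto)
    then have "\<bar>D$i$j\<bar> \<le> ?C * 0" by (rule LIMSEQ_le_const) (use le in auto)
    then show ?thesis by simp
  qed
  then have "D = 0" by (simp add: Finite_Cartesian_Product.vec_eq_iff)
  then show ?thesis by (simp add: D_def)
qed

lemma S_sym: "transpose X = X \<Longrightarrow> transpose (suminf (Tm M X)) = suminf (Tm M X)"
proof -
  assume X: "transpose X = X"
  have s: "summable (Tm M X)" by (rule Tm_summable)
  have e: "Tm M X k $ j $ i = Tm M X k $ i $ j" for k i j
  proof -
    have "transpose (Tm M X k) $ j $ i = Tm M X k $ j $ i" using Tm_sym[OF X, of M k] by simp
    then show ?thesis by (simp add: transpose_def)
  qed
  show ?thesis
    by (simp add: Finite_Cartesian_Product.vec_eq_iff transpose_def suminf_entry[OF s] e)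
qed

lemma S_psd: "pos_semidef X \<Longrightarrow> pos_semidef (suminf (Tm M X))"
proof -
  assume X: "pos_semidef X"
  have s: "summable (Tm M X)" by (rule Tm_summable)
  have "x \<bullet> (suminf (Tm M X) *v x) \<ge> 0" for x
  proof -
    have "x \<bullet> (suminf (Tm M X) *v x) = (\<Sum>k. x \<bullet> (Tm M X k *v x))"
      using bounded_linear.suminf[OF bl_quad s, of x] by simp
    also have "\<dots> \<ge> 0"
      by (intro suminf_nonneg bounded_linear.summable[OF bl_quad s]) (use X in \<open>simp add: quad_Tm pos_semidef_def\<close>)
    finally show ?thesis .
  qed
  moreover have "transpose (suminf (Tm M X)) = suminf (Tm M X)"
    using X by (intro S_sym) (simp add: pos_semidef_def sym_mat_def)
  ultimately show ?thesis by (simp add: pos_semidef_def sym_mat_def)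
qed

lemma trace_S_lower:
  assumes "\<And>x. s0 * (x \<bullet> x) \<le> x \<bullet> (X *v x)" and "s0 \<ge> 0"
  shows "trace (suminf (Tm M X)) \<ge> s0 * (\<Sum>k<N. Fr (mpow M k))"
proof -
  have s: "summable (Tm M X)" by (rule Tm_summable)
  have st: "summable (\<lambda>k. trace (Tm M X k))" using bounded_linear.summable[OF bl_trace s] .
  have nn: "trace (Tm M X k) \<ge> 0" for k
    using trace_Tm_lower[OF assms(1), of M k] Fr_nonneg[of "mpow M k"] assms(2)
    by (meson mult_nonneg_nonneg order_trans)
  have "s0 * (\<Sum>k<N. Fr (mpow M k)) = (\<Sum>k<N. s0 * Fr (mpow M k))" by (simp add: sum_distrib_left)
  also have "\<dots> \<le> (\<Sum>k<N. trace (Tm M X k))" by (intro sum_mono trace_Tm_lower assms(1))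
  also have "\<dots> \<le> (\<Sum>k. trace (Tm M X k))" by (rule sum_le_suminf[OF st]) (use nn in auto)
  also have "\<dots> = trace (suminf (Tm M X))" using bounded_linear.suminf[OF bl_trace s] by simp
  finally show ?thesis .
qed

end

lemma Sigma_K_eq:
  assumes "K \<in> stab_set A B"
  shows "Sigma_K A B Sw Ss K = suminf (Tm (A - B ** K) (Sigma_bar Sw B Ss))"
proof -
  from assms have "spectral_radius (A - B ** K) < 1" by (simp add: stab_set_def)
  from stable_bound[OF this] obtain c r where r: "0 < r" "r < 1"
    and b: "\<And>k i j. \<bar>mpow (A - B ** K) k $ i $ j\<bar> \<le> c * r^k" by blast
  show ?thesis unfolding Sigma_K_def
  proof (rule the_equality)
    show "suminf (Tm (A - B ** K) (Sigma_bar Sw B Ss)) = Sigma_bar Sw B Ss +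
        (A - B ** K) ** suminf (Tm (A - B ** K) (Sigma_bar Sw B Ss)) ** transpose (A - B ** K)"
      by (rule Tm_fix[OF r b])
  next
    fix S assume "S = Sigma_bar Sw B Ss + (A - B ** K) ** S ** transpose (A - B ** K)"
    then show "S = suminf (Tm (A - B ** K) (Sigma_bar Sw B Ss))"
      by (rule fix_unique[OF r b _ Tm_fix[OF r b]])
  qed
qed




lemma transpose_diff': "transpose ((A::real^'m^'n) - B) = transpose A - transpose B"
  by (simp add: transpose_def Finite_Cartesian_Product.vec_eq_iff)

lemma posdef_bound:
  assumes "pos_def (M::real^'n^'n)"
  shows "\<exists>c>0. \<forall>x. c * (x \<bullet> x) \<le> x \<bullet> (M *v x)"
proof -
  let ?S = "sphere (0::real^'n) 1"
  let ?f = "\<lambda>x. x \<bullet> (M *v x)"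
  have c1: "continuous_on ?S ((*v) M)"
    by (rule linear_continuous_on[OF matrix_vector_mul_bounded_linear])
  have cont: "continuous_on ?S ?f"
    using continuous_on_inner[OF continuous_on_id c1] by simp
  have ne: "?S \<noteq> {}" by simp
  obtain x0 where x0: "x0 \<in> ?S" and mn: "\<And>y. y \<in> ?S \<Longrightarrow> ?f x0 \<le> ?f y"
    using continuous_attains_inf[OF compact_sphere ne cont] by blast
  have "x0 \<noteq> 0" using x0 by auto
  then have c0: "?f x0 > 0" using assms by (simp add: pos_def_def)
  have "?f x0 * (x \<bullet> x) \<le> ?f x" for x
  proof (cases "x = 0")
    case True
    then show ?thesis by simp
  next
    case False
    let ?y = "(1 / norm x) *\<^sub>R x"
    have "?y \<in> ?S" using False by simp
    then have "?f x0 \<le> ?f ?y" by (rule mn)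
    also have "?f ?y = (1 / norm x)^2 * ?f x"
      by (simp add: matrix_scaleR_vector_ac scaleR_matrix_vector_assoc[symmetric] power2_eq_square)
    finally have "?f x0 \<le> (1 / norm x)^2 * ?f x" .
    then have "?f x0 * (norm x)^2 \<le> ?f x" using False by (simp add: field_simps)
    then show ?thesis by (simp add: power2_norm_eq_inner)
  qed
  then show ?thesis using c0 by blast
qed

lemma Qfun_nonneg: "0 \<le> Qfun a"
  unfolding Qfun_def by (intro divide_nonneg_pos integral_nonneg mult_nonneg_nonneg) auto

lemma Jc_nonneg: "0 \<le> Jc_cost A B Sw Ss eps q K"
  unfolding Jc_cost_def gauss_expect_def Let_def
  by (rule Bochner_Integration.integral_nonneg, intro mult_nonneg_nonneg prod_nonneg Qfun_nonneg) auto

lemma J_lower: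
  fixes A :: "real^'n^'n" and B :: "real^'p^'n" and K :: "real^'n^'p"
  assumes K: "K \<in> stab_set A B"
    and symQ: "transpose Q = Q" and q0: "q0 \<ge> 0" "\<And>x. q0 * (x \<bullet> x) \<le> x \<bullet> (Q *v x)"
    and R: "pos_semidef R"
    and Xpsd: "pos_semidef (Sigma_bar Sw B Ss)"
    and s0: "s0 \<ge> 0" "\<And>x. s0 * (x \<bullet> x) \<le> x \<bullet> (Sigma_bar Sw B Ss *v x)"
  shows "J_cost A B Q R Sw Ss K \<ge> q0 * s0 * (\<Sum>k<N. Fr (mpow (A - B ** K) k)) + trace (R ** Ss)"
proof -
  let ?M = "A - B ** K"
  let ?X = "Sigma_bar Sw B Ss"
  from K have "spectral_radius ?M < 1" by (simp add: stab_set_def)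
  from stable_bound[OF this] obtain c r where r0: "0 < r" and r1: "r < 1"
    and b: "\<And>k i j. \<bar>mpow ?M k $ i $ j\<bar> \<le> c * r^k" by blast
  define S where "S = suminf (Tm ?M ?X)"
  have SK: "Sigma_K A B Sw Ss K = S" unfolding S_def by (rule Sigma_K_eq[OF K])
  have Spsd: "pos_semidef S" unfolding S_def by (rule S_psd[OF r0 r1 b Xpsd])
  have trS: "trace S \<ge> s0 * (\<Sum>k<N. Fr (mpow ?M k))"
    unfolding S_def by (rule trace_S_lower[OF r0 r1 b s0(2) s0(1)])
  define W where "W = Q + transpose K ** R ** K"
  have symR: "transpose R = R" using R by (simp add: pos_semidef_def sym_mat_def)
  have symW: "transpose W = W"
    by (simp add: W_def transpose_add' matrix_transpose_mul symQ symR matrix_mul_assoc)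
  have quadW: "x \<bullet> (W *v x) \<ge> q0 * (x \<bullet> x)" for x
  proof -
    have "x \<bullet> ((transpose K ** R ** K) *v x) = (K *v x) \<bullet> (R *v (K *v x))"
      by (simp add: matrix_vector_mul_assoc[symmetric] dot_transpose)
    moreover have "(K *v x) \<bullet> (R *v (K *v x)) \<ge> 0" using R by (simp add: pos_semidef_def)
    ultimately show ?thesis using q0(2)[of x]
      by (simp add: W_def matrix_vector_mult_add_rdistrib inner_add_right)
  qed
  define P where "P = W - q0 *\<^sub>R mat 1"
  have Ppsd: "pos_semidef P"
  proof -
    have "transpose P = P" by (simp add: P_def transpose_diff' symW transpose_scalar)
    moreover have "x \<bullet> (P *v x) \<ge> 0" for x
    proof -
      have "P *v x = W *v x - q0 *\<^sub>R x"
        by (simp add: P_def matrix_vector_mult_diff_rdistrib scaleR_matrix_vector_assoc[symmetric])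
      then show ?thesis using quadW[of x] by (simp add: inner_diff_right)
    qed
    ultimately show ?thesis by (simp add: pos_semidef_def sym_mat_def)
  qed
  have "trace (P ** S) \<ge> 0" by (rule psd_trace_nonneg[OF Ppsd Spsd])
  moreover have "trace (P ** S) = trace (W ** S) - q0 * trace S"
  proof -
    have "P ** S = W ** S - q0 *\<^sub>R S" by (simp add: P_def mm_diff_r mm_scale_l)
    moreover have "trace (q0 *\<^sub>R S) = q0 * trace S" by (simp add: trace_def sum_distrib_left)
    ultimately show ?thesis by (simp add: trace_sub)
  qed
  ultimately have t1: "trace (W ** S) \<ge> q0 * trace S" by simp
  have "q0 * (s0 * (\<Sum>k<N. Fr (mpow ?M k))) \<le> q0 * trace S"
    by (rule mult_left_mono[OF trS q0(1)])
  with t1 have "trace (W ** S) \<ge> q0 * s0 * (\<Sum>k<N. Fr (mpow ?M k))" by (simp add: mult.assoc)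
  then show ?thesis by (simp add: J_cost_def SK W_def)
qed

theorem lemma1:
  fixes A :: "real^'n^'n" and B :: "real^'p^'n"
    and Q :: "real^'n^'n" and R :: "real^'p^'p"
    and Sw :: "real^'n^'n" and Ss :: "real^'p^'p"
    and eps delta lam :: real and q :: "real^'n"
  assumes "stabilizable A B"
    and "pos_def Q" and "pos_def R"
    and "detectable A (psd_sqrt Q)"
    and "pos_def Sw" and "pos_semidef Ss"
    and "eps > 0" and "delta > 0"
    and "lam > 0"
  shows "\<forall>K0 \<in> frontier (stab_set A B).
           filterlim (\<lambda>K. Lagr A B Q R Sw Ss eps delta q K lam) at_top
             (at K0 within stab_set A B)"
proof (intro ballI)
  fix K0 assume K0: "K0 \<in> frontier (stab_set A B)"
  let ?S = "stab_set A B"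
  have notin: "K0 \<notin> ?S" using K0 open_stab_set[of A B] by (simp add: frontier_def interior_open)
  from posdef_bound[OF assms(2)] obtain q0 where q0: "q0 > 0" "\<And>x. q0 * (x \<bullet> x) \<le> x \<bullet> (Q *v x)"
    by blast
  from posdef_bound[OF assms(5)] obtain s0 where s0: "s0 > 0" "\<And>x. s0 * (x \<bullet> x) \<le> x \<bullet> (Sw *v x)"
    by blast
  have symQ: "transpose Q = Q" using assms(2) by (simp add: pos_def_def sym_mat_def)
  have Rpsd: "pos_semidef R"
  proof -
    have "x \<bullet> (R *v x) \<ge> 0" for x
    proof (cases "x = 0")
      case True then show ?thesis by simp
    next
      case False then show ?thesis using assms(3) by (simp add: pos_def_def less_imp_le)
    qed
    then show ?thesis using assms(3) by (simp add: pos_def_def pos_semidef_def)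
  qed
  have symSs: "transpose Ss = Ss" using assms(6) by (simp add: pos_semidef_def sym_mat_def)
  have symSw: "transpose Sw = Sw" using assms(5) by (simp add: pos_def_def sym_mat_def)
  have quadX: "s0 * (x \<bullet> x) \<le> x \<bullet> (Sigma_bar Sw B Ss *v x)" for x
  proof -
    have "x \<bullet> ((B ** Ss ** transpose B) *v x) = (transpose B *v x) \<bullet> (Ss *v (transpose B *v x))"
      by (simp add: matrix_vector_mul_assoc[symmetric] dot_transpose)
    moreover have "(transpose B *v x) \<bullet> (Ss *v (transpose B *v x)) \<ge> 0"
      using assms(6) by (simp add: pos_semidef_def)
    ultimately show ?thesis using s0(2)[of x]
      by (simp add: Sigma_bar_def matrix_vector_mult_add_rdistrib inner_add_right)
  qed
  have Xpsd: "pos_semidef (Sigma_bar Sw B Ss)"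
  proof -
    have "transpose (Sigma_bar Sw B Ss) = Sigma_bar Sw B Ss"
      by (simp add: Sigma_bar_def transpose_add' matrix_transpose_mul symSw symSs matrix_mul_assoc)
    moreover have "x \<bullet> (Sigma_bar Sw B Ss *v x) \<ge> 0" for x
    proof -
      have "0 \<le> s0 * (x \<bullet> x)" using s0(1) by simp
      then show ?thesis using quadX[of x] by linarith
    qed
    ultimately show ?thesis by (simp add: pos_semidef_def sym_mat_def)
  qed
  define g where "g N K = (\<Sum>k<N. Fr (mpow (A - B ** K) k))" for N K
  have unb: "\<exists>N. g N K0 > T" for T
  proof (rule ccontr)
    assume "\<not> (\<exists>N. g N K0 > T)"
    then have le: "\<And>N. g N K0 \<le> T" by (simp add: not_less)
    have sm: "summable (\<lambda>k. Fr (mpow (A - B ** K0) k))"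
      by (rule summableI_nonneg_bounded[where x=T]) (use le Fr_nonneg in \<open>auto simp: g_def\<close>)
    then have "(\<lambda>k. Fr (mpow (A - B ** K0) k)) \<longlonglongrightarrow> 0" by (rule summable_LIMSEQ_zero)
    then have "eventually (\<lambda>k. Fr (mpow (A - B ** K0) k) < (1 / real CARD('n))^2) sequentially"
      by (rule order_tendstoD(2)) (simp add: finite_UNIV_card_ge_0)
    then obtain N0 where N0: "\<And>k. k \<ge> N0 \<Longrightarrow> Fr (mpow (A - B ** K0) k) < (1 / real CARD('n))^2"
      by (auto simp: eventually_sequentially)
    have "\<forall>i j. \<bar>mpow (A - B ** K0) (Suc N0) $ i $ j\<bar> < 1 / real CARD('n)"
    proof (intro allI)
      fix i j
      have "(mpow (A - B ** K0) (Suc N0) $ i $ j)^2 < (1 / real CARD('n))^2"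
        using Fr_entry[of "mpow (A - B ** K0) (Suc N0)" i j] N0[of "Suc N0"] by linarith
      then have "\<bar>mpow (A - B ** K0) (Suc N0) $ i $ j\<bar>^2 < (1 / real CARD('n))^2" by simp
      then show "\<bar>mpow (A - B ** K0) (Suc N0) $ i $ j\<bar> < 1 / real CARD('n)"
        by (rule power2_less_imp_less) simp
    qed
    then have "K0 \<in> ?S" unfolding stab_set_char[of A B] by blast
    with notin show False by simp
  qed
  show "filterlim (\<lambda>K. Lagr A B Q R Sw Ss eps delta q K lam) at_top (at K0 within ?S)"
    unfolding filterlim_at_top
  proof
    fix Z :: real
    define T where "T = (Z - trace (R ** Ss) + lam * delta) / (q0 * s0)"
    obtain N where N: "g N K0 > T" using unb by blast
    have cont: "continuous_on UNIV (g N)" unfolding g_def Fr_def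
      by (intro continuous_intros cont_mpow)
    have "((g N) \<longlongrightarrow> g N K0) (at K0)"
      using cont by (simp add: continuous_on_def)
    then have "((g N) \<longlongrightarrow> g N K0) (at K0 within ?S)"
      by (rule tendsto_within_subset) simp
    then have ev1: "eventually (\<lambda>K. g N K > T) (at K0 within ?S)" using N by (rule order_tendstoD(1))
    have ev2: "eventually (\<lambda>K. K \<in> ?S) (at K0 within ?S)" by (simp add: eventually_at_filter)
    show "eventually (\<lambda>K. Z \<le> Lagr A B Q R Sw Ss eps delta q K lam) (at K0 within ?S)"
      using ev1 ev2
    proof eventually_elim
      case (elim K)
      have J: "J_cost A B Q R Sw Ss K \<ge> q0 * s0 * g N K + trace (R ** Ss)"
        unfolding g_def by (rule J_lower[OF elim(2) symQ _ q0(2) Rpsd Xpsd _ quadX]) (use q0 s0 in auto)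
      have Jc: "Jc_cost A B Sw Ss eps q K \<ge> 0" by (rule Jc_nonneg)
      have "q0 * s0 * g N K \<ge> q0 * s0 * T" using elim(1) q0 s0 by (intro mult_left_mono) auto
      moreover have "q0 * s0 * T = Z - trace (R ** Ss) + lam * delta" using q0 s0 by (simp add: T_def)
      moreover have "Lagr A B Q R Sw Ss eps delta q K lam \<ge> J_cost A B Q R Sw Ss K - lam * delta"
        using Jc assms(9) by (simp add: Lagr_def algebra_simps)
      ultimately show ?case using J by linarith
    qed
  qed
qed


end
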